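(* There exists a sequence $f_0, f_1, \ldots \in \{0,1\}$ such that for every integer $n = \langle d_0, \ldots, d_s \rangle_2 \geq 2$: (i) if $d_0 = f_0, \ldots, d_s = f_s$, then $\nu_2(H(n,2)) \geq 1 - s$; (ii) if $d_0 = f_0, \ldots, d_{r-1} = f_{r-1}$ and $d_r \neq f_r$ for some positive integer $r \leq s$, then $\nu_2(H(n,2)) = r - 2s$. Precisely, the sequence is determined recursively by $f_0 = 1$ and, for every positive integer $s$, $f_s = 1$ if $\nu_2(H(\langle f_0, \ldots, f_{s-1}, 1 \rangle_2, 2)) \geq 1 - s$, and $f_s = 0$ otherwise. In particular, $f_0 = 1$, $f_1 = 1$, $f_2 = 0$.
   Context: For integers $n \geq k \geq 1$, $H(n,k) := \sum_{1 \leq i_1 < \cdots < i_k \leq n} \frac{1}{i_1 \cdots i_k}$. $\nu_2$ denotes the $2$-adic valuation on the rationals. The notation $\langle a_0, \ldots, a_v \rangle_2 := \sum_{i=0}^v a_i 2^{v-i}$ denotes a binary representation, with $a_i \in \{0,1\}$ and $a_0 = 1$. *)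

theory Defs
  imports Main "HOL-Computational_Algebra.Computational_Algebra"
begin

definition H :: "nat \<Rightarrow> nat \<Rightarrow> rat" where
  "H n k = (\<Sum>S\<in>{S. S \<subseteq> {1..n} \<and> card S = k}. 1 / (\<Prod>i\<in>S. of_nat i))"

definition nu2 :: "rat \<Rightarrow> int" where
  "nu2 q = int (multiplicity (2::int) (fst (quotient_of q)))
         - int (multiplicity (2::int) (snd (quotient_of q)))"

definition bin_val :: "(nat \<Rightarrow> nat) \<Rightarrow> nat \<Rightarrow> nat" where
  "bin_val a v = (\<Sum>i\<le>v. a i * 2 ^ (v - i))"

end

theory Submission
  imports Defs
begin


definition Zt :: "rat \<Rightarrow> bool" where
  "Zt q \<longleftrightarrow> (\<exists>a b::int. odd b \<and> q = of_int a / of_int b)"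
definition Ut :: "rat \<Rightarrow> bool" where
  "Ut q \<longleftrightarrow> (\<exists>a b::int. odd a \<and> odd b \<and> q = of_int a / of_int b)"

lemma Zt_int[simp]: "Zt (of_int a)"
  unfolding Zt_def by (rule exI[of _ a], rule exI[of _ 1]) simp
lemma Zt_nat[simp]: "Zt (of_nat a)"
  using Zt_int[of "int a"] by simp
lemma Zt_0[simp]: "Zt 0" using Zt_int[of 0] by simp

lemma Zt_add: assumes "Zt p" "Zt q" shows "Zt (p + q)"
proof -
  obtain a b c d where "odd b" "p = of_int a / of_int b" "odd d" "q = of_int c / of_int d"
    using assms unfolding Zt_def by blast
  moreover have "b \<noteq> 0" "d \<noteq> 0" using \<open>odd b\<close> \<open>odd d\<close> by auto
  ultimately show ?thesis unfolding Zt_def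
    by (intro exI[of _ "a*d+c*b"] exI[of _ "b*d"]) (simp add: field_simps)
qed

lemma Zt_mult: assumes "Zt p" "Zt q" shows "Zt (p * q)"
proof -
  obtain a b c d where "odd b" "p = of_int a / of_int b" "odd d" "q = of_int c / of_int d"
    using assms unfolding Zt_def by blast
  then show ?thesis unfolding Zt_def
    by (intro exI[of _ "a*c"] exI[of _ "b*d"]) simp
qed

lemma Zt_uminus: "Zt p \<Longrightarrow> Zt (- p)"
  unfolding Zt_def by (metis minus_divide_left of_int_minus)

lemma Zt_diff: "Zt p \<Longrightarrow> Zt q \<Longrightarrow> Zt (p - q)"
  using Zt_add[of p "-q"] Zt_uminus by simp

lemma Zt_sum: "(\<And>x. x \<in> A \<Longrightarrow> Zt (f x)) \<Longrightarrow> Zt (sum f A)"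
  by (induction A rule: infinite_finite_induct) (auto intro: Zt_add)

lemma Ut_Zt: "Ut q \<Longrightarrow> Zt q"
  unfolding Ut_def Zt_def by blast

lemma Zt_cases: "Zt q \<Longrightarrow> Ut q \<or> Zt (q / 2)"
proof -
  assume "Zt q"
  then obtain a b where ab: "odd b" "q = of_int a / of_int b" unfolding Zt_def by blast
  show ?thesis
  proof (cases "even a")
    case True
    then obtain c where "a = 2 * c" by blast
    then have "q / 2 = of_int c / of_int b" using ab by simp
    then show ?thesis using ab unfolding Zt_def by blast
  next
    case False then show ?thesis using ab unfolding Ut_def by blast
  qed
qed

lemma Ut_add_even: assumes "Ut u" "Zt z" shows "Ut (u + 2 * z)"
proof -
  obtain a b c d where h: "odd a" "odd b" "odd d" and ue: "u = of_int a / of_int b"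
    and ze: "z = of_int c / of_int d"
    using assms unfolding Zt_def Ut_def by blast
  have "b \<noteq> 0" "d \<noteq> 0" using h by auto
  then have "u + 2 * z = of_int (a*d+2*c*b) / of_int (b*d)"
    unfolding ue ze by (simp add: field_simps)
  then show ?thesis unfolding Ut_def using h
    by (intro exI[of _ "a*d+2*c*b"] exI[of _ "b*d"]) simp
qed

lemma Ut_Ut_even: assumes "Ut u" "Ut v" shows "Zt ((u + v) / 2)"
proof -
  obtain a b c d where h: "odd a" "odd b" "odd c" "odd d" and ue: "u = of_int a / of_int b"
    and ve: "v = of_int c / of_int d"
    using assms unfolding Ut_def by blast
  have "b \<noteq> 0" "d \<noteq> 0" using h by auto
  have "even (a*d+c*b)" using h by simp
  then obtain e where e: "a*d+c*b = 2 * e" by blast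
  have "(u + v) / 2 = of_int (a*d+c*b) / of_int (2*(b*d))"
    unfolding ue ve using \<open>b \<noteq> 0\<close> \<open>d \<noteq> 0\<close> by (simp add: field_simps)
  also have "\<dots> = of_int e / of_int (b*d)" unfolding e by simp
  finally show ?thesis unfolding Zt_def using h by (intro exI[of _ e] exI[of _ "b*d"]) simp
qed

lemma Ut_mult: assumes "Ut p" "Ut q" shows "Ut (p * q)"
proof -
  obtain a b c d where "odd a" "odd b" "p = of_int a / of_int b" "odd c" "odd d" "q = of_int c / of_int d"
    using assms unfolding Ut_def by blast
  then show ?thesis unfolding Ut_def
    by (intro exI[of _ "a*c"] exI[of _ "b*d"]) simp
qed

lemma Ut_div: assumes "Ut p" "Ut q" shows "Ut (p / q)"
proof -
  obtain a b c d where "odd a" "odd b" "p = of_int a / of_int b" "odd c" "odd d" "q = of_int c / of_int d"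
    using assms unfolding Ut_def by blast
  then show ?thesis unfolding Ut_def
    by (intro exI[of _ "a*d"] exI[of _ "b*c"]) simp
qed

lemma Ut_odd_nat: "odd (n::nat) \<Longrightarrow> Ut (of_nat n)"
  unfolding Ut_def by (rule exI[of _ "int n"], rule exI[of _ 1]) simp

lemma Ut_1[simp]: "Ut 1" using Ut_odd_nat[of 1] by simp

lemma nu2_frac:
  assumes "x \<noteq> 0" "y \<noteq> 0" "q = of_int x / of_int y"
  shows "nu2 q = int (multiplicity 2 x) - int (multiplicity 2 y)"
proof -
  obtain p d where pd: "quotient_of q = (p, d)" by (cases "quotient_of q")
  have "d > 0" using quotient_of_denom_pos[OF pd] .
  have "q = of_int p / of_int d" using quotient_of_div[OF pd] .
  with assms have e: "of_int p * of_int y = (of_int x * of_int d :: rat)"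
    using \<open>d > 0\<close> by (simp add: field_simps)
  then have e2: "p * y = x * d" using of_int_eq_iff by (metis of_int_mult)
  have "p \<noteq> 0" using e2 assms \<open>d>0\<close> by auto
  have "multiplicity 2 (p*y) = multiplicity 2 (x*d)" using e2 by simp
  then have "multiplicity (2::int) p + multiplicity 2 y = multiplicity 2 x + multiplicity 2 d"
    using \<open>p\<noteq>0\<close> assms \<open>d>0\<close>
    by (simp add: prime_elem_multiplicity_mult_distrib)
  then show ?thesis unfolding nu2_def pd by simp
qed

lemma mult2_odd: "odd (b::int) \<Longrightarrow> multiplicity 2 b = 0"
  by (rule not_dvd_imp_multiplicity_0) simp

lemma mult2_pow: "multiplicity (2::int) (2 ^ n * b) = n" if "odd b"
proof -
  have "b \<noteq> 0" using that by auto
  then have "multiplicity (2::int) (2 ^ n * b) = multiplicity 2 ((2::int)^n) + multiplicity 2 b"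
    by (simp add: prime_elem_multiplicity_mult_distrib)
  also have "\<dots> = n" using that by (simp add: multiplicity_same_power mult2_odd)
  finally show ?thesis .
qed

lemma nu2_eq_nat:
  assumes "Ut (q * 2 ^ a / 2 ^ b)"
  shows "nu2 q = int b - int a"
proof -
  obtain x y where xy: "odd x" "odd y" "q * 2 ^ a / 2 ^ b = of_int x / of_int y"
    using assms unfolding Ut_def by blast
  have "q = (q * 2 ^ a / 2 ^ b) * 2 ^ b / 2 ^ a" by simp
  also have "\<dots> = of_int (2^b * x) / of_int (2^a * y)" unfolding xy(3) by (simp add: mult.commute)
  finally have "q = of_int (2^b * x) / of_int (2^a * y)" .
  then have "nu2 q = int (multiplicity 2 (2^b * x)) - int (multiplicity 2 (2^a * y))"
    using xy by (intro nu2_frac) auto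
  then show ?thesis using xy by (simp add: mult2_pow)
qed

lemma nu2_zero[simp]: "nu2 0 = 0"
  unfolding nu2_def by simp

lemma nu2_ge_nat:
  assumes "Zt (q * 2 ^ a / 2 ^ b)" "b \<le> a"
  shows "nu2 q \<ge> int b - int a"
proof (cases "q = 0")
  case True then show ?thesis using assms by simp
next
  case False
  obtain x y where xy: "odd y" "q * 2 ^ a / 2 ^ b = of_int x / of_int y"
    using assms unfolding Zt_def by blast
  have "x \<noteq> 0" using xy False by auto
  define m where "m = multiplicity 2 x"
  obtain z where z: "x = 2 ^ m * z" "\<not> 2 dvd z"
    using multiplicity_decompose'[of x 2] \<open>x \<noteq> 0\<close> unfolding m_def by auto
  have "q * 2 ^ a / 2 ^ (b + m) = of_int z / of_int y"
    using xy(2) z(1) xy(1) by (simp add: field_simps power_add)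
  then have "Ut (q * 2 ^ a / 2 ^ (b + m))" unfolding Ut_def using z xy by blast
  from nu2_eq_nat[OF this] show ?thesis by simp
qed



definition Hp :: "nat \<Rightarrow> rat" where
  "Hp n = (\<Sum>j\<in>{1..n}. \<Sum>i\<in>{1..<j}. 1 / (of_nat i * of_nat j))"
definition Hn :: "nat \<Rightarrow> rat" where
  "Hn n = (\<Sum>i\<in>{1..n}. 1 / of_nat i)"

lemma H_eq: "H n 2 = Hp n"
proof -
  let ?h = "\<lambda>(j::nat,i::nat). {i,j}"
  let ?P = "SIGMA j:{1..n}. {1..<j}"
  have img: "{S. S \<subseteq> {1..n} \<and> card S = 2} = ?h ` ?P"
  proof (rule set_eqI, rule iffI)
    fix S assume "S \<in> {S. S \<subseteq> {1..n} \<and> card S = 2}"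
    then obtain x y where S: "S = {x,y}" "x \<noteq> y" "x \<in> {1..n}" "y \<in> {1..n}"
      by (auto simp: card_2_iff)
    show "S \<in> ?h ` ?P"
    proof (cases "x < y")
      case True then show ?thesis using S by (intro image_eqI[of _ _ "(y,x)"]) auto
    next
      case False then show ?thesis using S by (intro image_eqI[of _ _ "(x,y)"]) auto
    qed
  next
    fix S assume "S \<in> ?h ` ?P"
    then show "S \<in> {S. S \<subseteq> {1..n} \<and> card S = 2}" by auto
  qed
  have inj: "inj_on ?h ?P"
  proof (rule inj_onI)
    fix p q assume "p \<in> ?P" "q \<in> ?P" "?h p = ?h q"
    then show "p = q"
      by (cases p; cases q) (auto simp: doubleton_eq_iff)
  qed
  have "H n 2 = (\<Sum>S\<in>?h ` ?P. 1 / (\<Prod>i\<in>S. of_nat i))"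
    unfolding H_def img ..
  also have "\<dots> = (\<Sum>p\<in>?P. 1 / (\<Prod>i\<in>?h p. of_nat i))"
    by (rule sum.reindex[OF inj, unfolded comp_def])
  also have "\<dots> = (\<Sum>p\<in>?P. 1 / (of_nat (snd p) * of_nat (fst p)))"
    by (rule sum.cong) auto
  also have "\<dots> = Hp n"
    unfolding Hp_def by (subst sum.Sigma) (auto simp: case_prod_beta)
  finally show ?thesis .
qed

lemma Hp_Suc: "Hp (Suc n) = Hp n + Hn n / of_nat (Suc n)"
proof -
  have "(\<Sum>i\<in>{1..<Suc n}. 1 / (of_nat i * of_nat (Suc n) :: rat)) = Hn n / of_nat (Suc n)"
    unfolding Hn_def sum_divide_distrib atLeastLessThanSuc_atLeastAtMost
    by (rule sum.cong) auto
  then show ?thesis unfolding Hp_def by simp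
qed

lemma Hn_nonneg: "Hn n \<ge> 0" unfolding Hn_def by (rule sum_nonneg) simp

lemma Hp_pos: "n \<ge> 2 \<Longrightarrow> Hp n > 0"
proof (induction n rule: dec_induct)
  case base
  have "Hp 2 = Hp 1 + Hn 1 / 2" using Hp_Suc[of 1] by (simp add: numeral_2_eq_2)
  also have "Hp 1 = 0" unfolding Hp_def by simp
  also have "Hn 1 = 1" unfolding Hn_def by simp
  finally show ?case by simp
next
  case (step m)
  then show ?case using Hp_Suc[of m] Hn_nonneg[of m]
    by (metis add_pos_nonneg divide_nonneg_nonneg of_nat_0_le_iff)
qed

lemma Zt_pow_div:
  assumes "0 < i" "\<not> 2^(m+1) dvd i"
  shows "Zt (2^m / of_nat i)"
proof -
  define v where "v = multiplicity 2 i"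
  obtain u where u: "i = 2 ^ v * u" "\<not> 2 dvd u"
    using multiplicity_decompose'[of i 2] assms(1) unfolding v_def by auto
  have "v \<le> m"
  proof (rule ccontr)
    assume "\<not> v \<le> m"
    then have "(2::nat)^(m+1) dvd 2^v" by (intro le_imp_power_dvd) simp
    then show False using assms(2) u(1) by (metis dvd_mult2)
  qed
  have e: "(2::rat)^m = 2^v * 2^(m-v)" using \<open>v\<le>m\<close> by (metis le_add_diff_inverse power_add)
  have "(2::rat)^m / of_nat i = 2^(m-v) / of_nat u"
    unfolding e u(1) by simp
  also have "\<dots> = of_int (2^(m-v)) / of_int (int u)" by simp
  finally have "(2::rat)^m / of_nat i = of_int (2^(m-v)) / of_int (int u)" .
  then show ?thesis unfolding Zt_def using u(2)
    by (intro exI[of _ "2^(m-v)"] exI[of _ "int u"]) auto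
qed

lemma Hn_unit:
  assumes "2^s \<le> N" "N < 2^(s+1)"
  shows "Ut (2^s * Hn N)"
proof -
  have fin: "finite {1..N}" by simp
  have mem: "2^s \<in> {1..N}" using assms by simp
  have "2^s * Hn N = (\<Sum>i\<in>{1..N}. 2^s / of_nat i)"
    unfolding Hn_def sum_distrib_left by simp
  also have "\<dots> = 2^s / of_nat (2^s) + (\<Sum>i\<in>{1..N} - {2^s}. 2^s / of_nat i)"
    using sum.remove[OF fin mem, of "\<lambda>i. (2::rat)^s / of_nat i"] by simp
  also have "(\<Sum>i\<in>{1..N} - {2^s}. (2::rat)^s / of_nat i) = 2 * (\<Sum>i\<in>{1..N} - {2^s}. 2^s / (2 * of_nat i))"
    unfolding sum_distrib_left by (rule sum.cong) auto
  finally have eq: "2^s * Hn N = 1 + 2 * (\<Sum>i\<in>{1..N} - {2^s}. 2^s / (2 * of_nat i))" by simp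
  have "Zt (\<Sum>i\<in>{1..N} - {2^s}. 2^s / (2 * of_nat i))"
  proof (rule Zt_sum)
    fix i assume i: "i \<in> {1..N} - {2^s}"
    have "\<not> 2^s dvd i"
    proof
      assume "2^s dvd i"
      then obtain c where c: "i = 2^s * c" by blast
      have "c \<ge> 1" using i c by (cases c) auto
      moreover have "c < 2"
      proof (rule ccontr)
        assume "\<not> c < 2"
        then have "(2::nat)^s*2 \<le> 2^s*c" by (intro mult_le_mono2) simp
        moreover have "2^s*c \<le> N" using i c by simp
        ultimately have "2^s*2 \<le> N" by linarith
        then show False using assms(2) by (simp add: mult.commute)
      qed
      ultimately have "c = 1" by simp
      then show False using i c by simp
    qed
    then have "s \<ge> 1" by (cases s) auto
    then have "Zt (2^(s-1) / of_nat i)" using Zt_pow_div[of i "s-1"] i \<open>\<not> 2^s dvd i\<close> by simp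
    moreover have "(2::rat)^s / (2 * of_nat i) = 2^(s-1) / of_nat i"
      using \<open>s \<ge> 1\<close> by (cases s) auto
    ultimately show "Zt (2^s / (2 * of_nat i))" by simp
  qed
  then show ?thesis unfolding eq using Ut_add_even[OF Ut_1] by simp
qed



lemma Hp_Sigma: "Hp n = (\<Sum>p\<in>(SIGMA j:{1..n}. {1..<j}). 1 / (of_nat (snd p) * of_nat (fst p)))"
  unfolding Hp_def by (subst sum.Sigma) (auto simp: case_prod_beta)

definition X :: "nat \<Rightarrow> nat \<Rightarrow> rat" where "X s n = 2^(2*s) * Hp n"

lemma term_Zt:
  assumes "0 < i" "0 < j" "i < 2^(s+1)" "j < 2^(s+1)" "t \<le> s" "\<not> 2^(s-t) dvd i"
  shows "Zt ((2::rat)^(2*s) / (of_nat i * of_nat j) / 2^(t+1))"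
proof -
  define k where "k = s - t"
  have "k \<ge> 1" using assms(6) unfolding k_def[symmetric] by (cases k) auto
  have z1: "Zt (2^(k-1) / of_nat i)" using Zt_pow_div[of i "k-1"] assms(1,6) \<open>k\<ge>1\<close>
    unfolding k_def[symmetric] by simp
  have "\<not> 2^(s+1) dvd j" using assms(2,4) by (auto dest: dvd_imp_le)
  then have z2: "Zt (2^s / of_nat j)" using Zt_pow_div[of j s] assms(2) by simp
  have e: "2*s = (t+1) + ((k-1) + s)" using \<open>k\<ge>1\<close> assms(5) unfolding k_def by simp
  have "(2::rat)^(2*s) / (of_nat i * of_nat j) / 2^(t+1) = (2^(k-1) / of_nat i) * (2^s / of_nat j)"
    unfolding e power_add by simp
  then show ?thesis using Zt_mult[OF z1 z2] by simp
qed

lemma prefix: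
  assumes "n < 2^(s+1)" "t \<le> s"
  shows "Zt ((X s n - X t (n div 2^(s-t))) / 2^(t+1))"
proof -
  define k where "k = s - t"
  define M where "M = n div 2^k"
  define P where "P = (\<lambda>n::nat. SIGMA j:{1..n}. {1..<j})"
  define g where "g = (\<lambda>s (p::nat\<times>nat). (2::rat)^(2*s) / (of_nat (snd p) * of_nat (fst p)))"
  have Xs: "X s n = sum (g s) (P n)" for s n
    unfolding X_def Hp_Sigma sum_distrib_left g_def P_def by simp
  define D where "D = {p \<in> P n. 2^k dvd fst p \<and> 2^k dvd snd p}"
  have fin: "finite (P n)" unfolding P_def by simp
  have sub: "D \<subseteq> P n" by (auto simp: D_def)
  have spl: "sum (g s) (P n) = sum (g s) (P n - D) + sum (g s) D"
    by (rule sum.subset_diff[OF sub fin])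
  define h where "h = (\<lambda>(b::nat,a::nat). ((2::nat)^k*b, (2::nat)^k*a))"
  have inj: "inj_on h (P M)" unfolding h_def by (auto simp: inj_on_def)
  have pk: "(0::nat) < 2^k" by simp
  have img: "D = h ` P M"
  proof (rule set_eqI, rule iffI)
    fix p assume "p \<in> D"
    then obtain j i where p: "p = (j,i)" "1 \<le> i" "i < j" "j \<le> n" "2^k dvd j" "2^k dvd i"
      unfolding D_def P_def by (cases p) auto
    obtain b where b: "j = 2^k * b" using p by blast
    obtain a where a: "i = 2^k * a" using p by blast
    have "1 \<le> a" using p a by (cases a) auto
    moreover have "a < b" using p a b by simp
    moreover have "b \<le> M" unfolding M_def using p b pk
      by (simp add: less_eq_div_iff_mult_less_eq mult.commute)
    ultimately show "p \<in> h ` P M" unfolding P_def h_def using p a b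
      by (intro image_eqI[of _ _ "(b,a)"]) auto
  next
    fix p assume "p \<in> h ` P M"
    then obtain b a where p: "p = h (b,a)" "1 \<le> a" "a < b" "b \<le> M" unfolding P_def by auto
    have "b * 2^k \<le> n" using p(4) pk unfolding M_def by (simp add: less_eq_div_iff_mult_less_eq)
    then show "p \<in> D" using p unfolding D_def P_def h_def by (auto simp: mult.commute)
  qed
  have e: "(2::rat)^(2*s) = 2^(2*t) * (2^k * 2^k)"
    using assms(2) unfolding k_def by (simp flip: power_add)
  have "sum (g s) D = sum (g s \<circ> h) (P M)" unfolding img by (rule sum.reindex[OF inj])
  also have "\<dots> = sum (g t) (P M)"
    by (rule sum.cong) (auto simp: h_def g_def e)
  finally have sD: "sum (g s) D = X t M" using Xs by simp
  have rest: "Zt (sum (g s) (P n - D) / 2^(t+1))"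
    unfolding sum_divide_distrib
  proof (rule Zt_sum)
    fix p assume "p \<in> P n - D"
    then obtain j i where p: "p = (j,i)" "1 \<le> i" "i < j" "j \<le> n" "\<not> (2^k dvd j \<and> 2^k dvd i)"
      unfolding D_def P_def by (cases p) auto
    have r: "i < 2^(s+1)" "j < 2^(s+1)" using p assms(1) by auto
    show "Zt (g s p / 2^(t+1))"
    proof (cases "2^k dvd i")
      case False
      then show ?thesis using term_Zt[of i j s t] p r assms(2) unfolding g_def k_def by simp
    next
      case True
      then have "\<not> 2^k dvd j" using p by auto
      then show ?thesis using term_Zt[of j i s t] p r assms(2) unfolding g_def k_def
        by (simp add: mult.commute)
    qed
  qed
  have "X s n - X t M = sum (g s) (P n - D)" using Xs[of s n] spl sD by simp
  then show ?thesis using rest unfolding M_def k_def by simp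
qed

lemma bin_val_Suc: "bin_val a (Suc v) = 2 * bin_val a v + a (Suc v)"
proof -
  have "bin_val a (Suc v) = (\<Sum>i\<le>v. a i * 2 ^ (Suc v - i)) + a (Suc v)"
    unfolding bin_val_def by simp
  also have "(\<Sum>i\<le>v. a i * 2 ^ (Suc v - i)) = 2 * bin_val a v"
    unfolding bin_val_def sum_distrib_left by (rule sum.cong) (auto simp: Suc_diff_le)
  finally show ?thesis .
qed

lemma bin_val_0[simp]: "bin_val a 0 = a 0" unfolding bin_val_def by simp

lemma bin_val_cong: "(\<And>i. i \<le> v \<Longrightarrow> a i = b i) \<Longrightarrow> bin_val a v = bin_val b v"
  unfolding bin_val_def by (rule sum.cong) auto

lemma bin_val_split:
  assumes "\<And>i. i \<le> r + k \<Longrightarrow> a i \<le> 1"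
  shows "\<exists>low < 2^k. bin_val a (r + k) = bin_val a r * 2^k + low"
  using assms
proof (induction k)
  case 0 then show ?case by simp
next
  case (Suc k)
  then obtain low where low: "low < 2^k" "bin_val a (r + k) = bin_val a r * 2^k + low" by force
  have "a (Suc (r+k)) \<le> 1" using Suc.prems by simp
  then have "2 * low + a (Suc (r+k)) < 2^(Suc k)" using low(1) by simp
  moreover have "bin_val a (r + Suc k) = bin_val a r * 2^(Suc k) + (2 * low + a (Suc (r+k)))"
    using bin_val_Suc[of a "r+k"] low(2) by simp
  ultimately show ?case by blast
qed

lemma bin_val_div:
  assumes "\<And>i. i \<le> s \<Longrightarrow> a i \<le> 1" "r \<le> s"
  shows "bin_val a s div 2^(s-r) = bin_val a r"
proof -
  obtain low where "low < 2^(s-r)" "bin_val a (r + (s-r)) = bin_val a r * 2^(s-r) + low"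
    using bin_val_split[of r "s-r" a] assms by auto
  then show ?thesis using assms(2) by simp
qed

lemma bin_val_range:
  assumes "\<And>i. i \<le> s \<Longrightarrow> a i \<le> 1" "a 0 = 1"
  shows "2^s \<le> bin_val a s \<and> bin_val a s < 2^(s+1)"
proof -
  obtain low where "low < 2^s" "bin_val a (0 + s) = bin_val a 0 * 2^s + low"
    using bin_val_split[of 0 s a] assms by auto
  then show ?thesis using assms(2) by simp
qed



fun g :: "nat \<Rightarrow> nat" where
  "g 0 = 1"
| "g (Suc s) = 2 * g s + (if nu2 (H (2 * g s + 1) 2) \<ge> - int s then 1 else 0)"

definition ff :: "nat \<Rightarrow> nat" where "ff s = g s mod 2"

lemma ff_0: "ff 0 = 1" unfolding ff_def by simp
lemma ff_Suc: "ff (Suc s) = (if nu2 (H (2 * g s + 1) 2) \<ge> - int s then 1 else 0)"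
  unfolding ff_def by simp
lemma ff_le: "ff i \<le> 1" unfolding ff_def by simp
lemma g_Suc': "g (Suc s) = 2 * g s + ff (Suc s)" using ff_Suc by simp

lemma g_bin: "bin_val ff s = g s"
  by (induction s) (simp_all add: bin_val_Suc ff_0 g_Suc' del: g.simps(2))

lemma g_range: "2^s \<le> g s \<and> g s < 2^(s+1)"
  using bin_val_range[of s ff] ff_le ff_0 g_bin by simp

lemma Ut_uminus: "Ut u \<Longrightarrow> Ut (- u)"
proof -
  assume "Ut u"
  then obtain a b where h: "odd a" "odd b" "u = of_int a / of_int b" unfolding Ut_def by blast
  then show "Ut (- u)" unfolding Ut_def by (intro exI[of _ "-a"] exI[of _ b]) simp
qed

lemma X_H: "X s n = 2^(2*s) * H n 2" unfolding X_def H_eq ..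

lemma step:
  assumes A: "Zt (X t (g t) / 2^(t+1))"
  shows "Zt (X (Suc t) (g (Suc t)) / 2^(Suc t+1)) \<and>
         Ut (X (Suc t) (2*g t + (1 - ff (Suc t))) / 2^(Suc t))"
proof -
  define F where "F = g t"
  define T where "T = Suc t"
  have Fr: "2^t \<le> F" "F < 2^T" using g_range[of t] unfolding F_def T_def by auto
  have d0: "(2*F) div 2^(T-t) = F" unfolding T_def by simp
  have d1: "(2*F+1) div 2^(T-t) = F" unfolding T_def by simp
  have p0: "Zt ((X T (2*F) - X t F) / 2^T)"
    using prefix[of "2*F" T t] Fr d0 unfolding T_def by simp
  have A': "Zt (X t F / 2^T)" using A unfolding F_def T_def by simp
  define z where "z = X T (2*F) / 2^T"
  define z' where "z' = X T (2*F+1) / 2^T"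
  define u where "u = 2^T * Hn (2*F) / of_nat (2*F+1)"
  have Zz: "Zt z" using Zt_add[OF p0 A'] unfolding z_def by (simp add: diff_divide_distrib)
  have Uu: "Ut u" unfolding u_def
    using Ut_div[OF Hn_unit[of T "2*F"] Ut_odd_nat[of "2*F+1"]] Fr unfolding T_def by simp
  have hs: "Hp (2*F+1) = Hp (2*F) + Hn (2*F) / of_nat (2*F+1)" using Hp_Suc[of "2*F"] by simp
  have eqX: "X T (2*F+1) = X T (2*F) + 2^(2*T) * Hn (2*F) / of_nat (2*F+1)"
    unfolding X_def hs by (simp add: distrib_left)
  have pw: "(2::rat)^(2*T) = 2^T * 2^T" by (simp flip: power_add)
  have zz: "z' = z + u" unfolding z'_def z_def u_def eqX pw by (simp add: add_divide_distrib)
  have Zz': "Zt z'" unfolding zz using Zz Ut_Zt[OF Uu] by (rule Zt_add)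
  define q where "q = H (2*F+1) 2"
  have qz: "q * 2^(2*T) / 2^T = z'" unfolding q_def z'_def X_H by (simp add: mult.commute)
  have gS: "g T = 2*F + ff T" using g_Suc' unfolding T_def F_def .
  have ffT: "ff T = (if nu2 q \<ge> - int t then 1 else 0)" unfolding T_def q_def F_def ff_Suc ..
  show ?thesis
  proof (cases "Ut z'")
    case True
    have "nu2 q = int T - int (2*T)" using nu2_eq_nat[of q "2*T" T] True qz by simp
    then have "ff T = 0" using ffT unfolding T_def by simp
    then have g: "g T = 2*F" using gS by simp
    have "Zt ((z' + (-u))/2)" by (rule Ut_Ut_even[OF True Ut_uminus[OF Uu]])
    then have "Zt (z / 2)" using zz by simp
    then have a: "Zt (X T (g T) / 2^(T+1))" unfolding g z_def by (simp add: field_simps)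
    have b: "Ut (X T (2*F + (1 - ff T)) / 2^T)" using True \<open>ff T = 0\<close> unfolding z'_def by simp
    from a b show ?thesis unfolding T_def F_def by simp
  next
    case False
    then have Z2: "Zt (z' / 2)" using Zt_cases[OF Zz'] by blast
    have "Zt (q * 2^(2*T) / 2^(T+1))" using Z2 qz by (simp add: field_simps)
    then have "nu2 q \<ge> int (T+1) - int (2*T)" by (rule nu2_ge_nat) (simp add: T_def)
    then have "ff T = 1" using ffT unfolding T_def by simp
    then have g: "g T = 2*F+1" using gS by simp
    have a: "Zt (X T (g T) / 2^(T+1))" unfolding g using Z2 unfolding z'_def by (simp add: field_simps)
    have "Ut (-u + 2 * (z'/2))" by (rule Ut_add_even[OF Ut_uminus[OF Uu] Z2])
    moreover have "-u + 2 * (z'/2) = z" unfolding zz by (simp add: field_simps)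
    ultimately have "Ut z" by simp
    then have b: "Ut (X T (2*F + (1 - ff T)) / 2^T)" using \<open>ff T = 1\<close> unfolding z_def by simp
    from a b show ?thesis unfolding T_def F_def by simp
  qed
qed

lemma mainA: "Zt (X t (g t) / 2^(t+1))"
proof (induction t)
  case 0
  have "Hp 1 = 0" unfolding Hp_def by simp
  then show ?case unfolding X_def by simp
next
  case (Suc t) then show ?case using step by blast
qed

lemma mainB: "Ut (X (Suc t) (2*g t + (1 - ff (Suc t))) / 2^(Suc t))"
  using step[OF mainA] by blast

lemma Hn_Suc: "Hn (Suc n) = Hn n + 1 / of_nat (Suc n)"
  unfolding Hn_def by simp



lemma Hp_0: "Hp 0 = 0" unfolding Hp_def by simp
lemma Hn_0: "Hn 0 = 0" unfolding Hn_def by simp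

lemma Hp_3: "Hp 3 = 1"
  by (simp add: numeral_eq_Suc Hp_Suc Hn_Suc Hp_0 Hn_0)
lemma Hp_7: "Hp 7 = 469/180"
  by (simp add: numeral_eq_Suc Hp_Suc Hn_Suc Hp_0 Hn_0)

theorem corollary2p1:
  shows "\<exists>f :: nat \<Rightarrow> nat.
    (\<forall>i. f i \<in> {0, 1}) \<and>
    f 0 = 1 \<and>
    (\<forall>s>0. f s = (if nu2 (H (bin_val (f(s := 1)) s) 2) \<ge> 1 - int s then 1 else 0)) \<and>
    f 1 = 1 \<and> f 2 = 0 \<and>
    (\<forall>(n::nat) (s::nat) (d::nat \<Rightarrow> nat).
       (\<forall>i\<le>s. d i \<in> {0, 1}) \<and> d 0 = 1 \<and> n = bin_val d s \<and> n \<ge> 2 \<longrightarrow>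
         ((\<forall>i\<le>s. d i = f i) \<longrightarrow> nu2 (H n 2) \<ge> 1 - int s) \<and>
         (\<forall>r. 0 < r \<and> r \<le> s \<and> (\<forall>i<r. d i = f i) \<and> d r \<noteq> f r \<longrightarrow>
              nu2 (H n 2) = int r - 2 * int s))"
proof -
  have c1: "\<forall>i. ff i \<in> {0,1}" using ff_le by (auto simp: le_Suc_eq)
  have c2: "ff 0 = 1" by (rule ff_0)
  have c3: "\<forall>s>0. ff s = (if nu2 (H (bin_val (ff(s := 1)) s) 2) \<ge> 1 - int s then 1 else 0)"
  proof (intro allI impI)
    fix s :: nat assume "0 < s"
    then obtain s' where s: "s = Suc s'" by (cases s) auto
    have "bin_val (ff(s:=1)) s = 2 * bin_val (ff(s:=1)) s' + 1" unfolding s bin_val_Suc by simp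
    also have "bin_val (ff(s:=1)) s' = bin_val ff s'" by (rule bin_val_cong) (simp add: s)
    finally have "bin_val (ff(s:=1)) s = 2 * bin_val ff s' + 1" .
    then have "bin_val (ff(s:=1)) s = 2 * g s' + 1" unfolding g_bin .
    then show "ff s = (if nu2 (H (bin_val (ff(s := 1)) s) 2) \<ge> 1 - int s then 1 else 0)"
      unfolding s ff_Suc by simp
  qed
  have n1: "nu2 1 = 0" using nu2_eq_nat[of 1 0 0] by simp
  have c4: "ff 1 = 1"
    using ff_Suc[of 0] n1 by (simp add: H_eq Hp_3)
  have U7: "Ut ((469/180::rat) * 2^2 / 2^0)"
    unfolding Ut_def by (intro exI[of _ 469] exI[of _ 45]) simp
  have n7: "nu2 (469/180) = -2" using nu2_eq_nat[OF U7] by simp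
  have g1: "g 1 = 3" using c4 g_Suc'[of 0] by simp
  have c5: "ff 2 = 0"
  proof -
    have "ff 2 = (if nu2 (H (2 * g 1 + 1) 2) \<ge> - int 1 then 1 else 0)"
      using ff_Suc[of 1] by (simp add: numeral_2_eq_2)
    also have "H (2 * g 1 + 1) 2 = 469/180" using Hp_7 g1 by (simp add: H_eq)
    finally show ?thesis using n7 by simp
  qed
  have c6: "\<forall>(n::nat) (s::nat) (d::nat \<Rightarrow> nat).
       (\<forall>i\<le>s. d i \<in> {0, 1}) \<and> d 0 = 1 \<and> n = bin_val d s \<and> n \<ge> 2 \<longrightarrow>
         ((\<forall>i\<le>s. d i = ff i) \<longrightarrow> nu2 (H n 2) \<ge> 1 - int s) \<and>
         (\<forall>r. 0 < r \<and> r \<le> s \<and> (\<forall>i<r. d i = ff i) \<and> d r \<noteq> ff r \<longrightarrow>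
              nu2 (H n 2) = int r - 2 * int s)"
  proof (intro allI impI)
    fix n s and d :: "nat \<Rightarrow> nat"
    assume h: "(\<forall>i\<le>s. d i \<in> {0, 1}) \<and> d 0 = 1 \<and> n = bin_val d s \<and> n \<ge> 2"
    have dl: "\<And>i. i \<le> s \<Longrightarrow> d i \<le> 1" using h by fastforce
    have rng: "2^s \<le> n \<and> n < 2^(s+1)" using bin_val_range[of s d] dl h by auto
    have "s \<ge> 1"
    proof (rule ccontr)
      assume "\<not> s \<ge> 1"
      then have "s = 0" by simp
      then show False using h by auto
    qed
    show "((\<forall>i\<le>s. d i = ff i) \<longrightarrow> nu2 (H n 2) \<ge> 1 - int s) \<and>
         (\<forall>r. 0 < r \<and> r \<le> s \<and> (\<forall>i<r. d i = ff i) \<and> d r \<noteq> ff r \<longrightarrow>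
              nu2 (H n 2) = int r - 2 * int s)"
    proof (intro conjI allI impI)
      assume "\<forall>i\<le>s. d i = ff i"
      then have "n = g s" using h bin_val_cong[of s d ff] g_bin by auto
      then have "Zt (H n 2 * 2^(2*s) / 2^(s+1))" using mainA[of s] unfolding X_H
        by (simp add: mult.commute)
      from nu2_ge_nat[OF this] \<open>s \<ge> 1\<close> show "nu2 (H n 2) \<ge> 1 - int s" by simp
    next
      fix r assume hr: "0 < r \<and> r \<le> s \<and> (\<forall>i<r. d i = ff i) \<and> d r \<noteq> ff r"
      obtain r' where r: "r = Suc r'" using hr by (cases r) auto
      have br: "bin_val d r' = g r'" using hr bin_val_cong[of r' d ff] g_bin r by auto
      have "d r \<le> 1" using dl hr by simp
      then have dr: "d r = 1 - ff r" using hr ff_le[of r] by auto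
      have M: "bin_val d r = 2*g r' + (1 - ff (Suc r'))"
        using bin_val_Suc[of d r'] br dr r by simp
      have Ub: "Ut (X r (bin_val d r) / 2^r)" using mainB[of r'] M r by simp
      have dv: "n div 2^(s-r) = bin_val d r" using bin_val_div[of s d r] dl hr h by auto
      have Zp: "Zt ((X s n - X r (bin_val d r)) / 2^(r+1))"
        using prefix[of n s r] rng hr dv by auto
      have "Ut (X r (bin_val d r)/2^r + 2 * ((X s n - X r (bin_val d r)) / 2^(r+1)))"
        by (rule Ut_add_even[OF Ub Zp])
      moreover have "X r (bin_val d r)/2^r + 2 * ((X s n - X r (bin_val d r)) / 2^(r+1)) = X s n / 2^r"
        by (simp add: field_simps)
      moreover have "X s n / 2^r = H n 2 * 2^(2*s) / 2^r" unfolding X_H by (simp add: mult.commute)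
      ultimately have "Ut (H n 2 * 2^(2*s) / 2^r)" by simp
      from nu2_eq_nat[OF this] show "nu2 (H n 2) = int r - 2 * int s" by simp
    qed
  qed
  show ?thesis
    apply (rule exI[of _ ff])
    using c1 c2 c3 c4 c5 c6 by blast
qed


end
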